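(* For every $\epsilon\in(0,1)$ there exist $n_\epsilon>0$ and $c_\epsilon>0$ such that for every $n>n_\epsilon$ there exist a read-once DNF formula $f:\{0,1\}^n\to\{0,1\}$ and a cost vector $c\in\mathbb{R}_{>0}^n$ such that, under the uniform distribution ($p_i=1/2$ for all $i$), $$\mathsf{OPT}_{\mathcal N}(f,c,p)\ge c_\epsilon\,\frac{n^{1-\epsilon}}{\log n}\cdot \mathsf{OPT}_{\mathcal A}(f,c,p).$$
   Context: Stochastic Boolean Function Evaluation (SBFE) setup: $f:\{0,1\}^n\to\{0,1\}$ is a known Boolean function, $c\in\mathbb{R}_{>0}^n$ a cost vector and $p\in(0,1)^n$ a probability vector. The unknown input $x\in\{0,1\}^n$ is random with independent coordinates and $\Pr(x_i=1)=p_i$. The value $x_i$ can only be learned by testing variable $i$, at cost $c_i$. A strategy tests variables sequentially until $f(x)$ is determined, i.e. until $f(x')=f(x)$ for every $x'$ agreeing with $x$ on all tested coordinates. An adaptive strategy is a decision tree (the next test may depend on previous outcomes); a non-adaptive strategy is a fixed permutation of $[n]$, with variables tested in that order until $f(x)$ is determined. $\mathrm{cost}_{c,p}(f,S)$ is the expected total cost of tests performed by $S$ for random $x$. $\mathsf{OPT}_{\mathcal A}(f,c,p)$ (resp. $\mathsf{OPT}_{\mathcal N}(f,c,p)$) is the minimum of $\mathrm{cost}_{c,p}(f,S)$ over all adaptive (resp. non-adaptive) strategies. A DNF formula is a disjunction of terms, each a conjunction of literals; it is read-once if no variable is negated and distinct terms contain disjoint sets of variables. *)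

theory Defs
  imports Complex_Main
begin

text \<open>Inputs in {0,1}^n are modelled as functions nat => bool that are False
  outside {0..<n}; variable i (for i < n) is the coordinate x i.\<close>

definition cube :: "nat \<Rightarrow> (nat \<Rightarrow> bool) set" where
  "cube n = {x. \<forall>i\<ge>n. x i = False}"

definition prob_input :: "nat \<Rightarrow> (nat \<Rightarrow> real) \<Rightarrow> (nat \<Rightarrow> bool) \<Rightarrow> real" where
  "prob_input n p x = (\<Prod>i<n. if x i then p i else 1 - p i)"

definition determined ::
  "nat \<Rightarrow> ((nat \<Rightarrow> bool) \<Rightarrow> bool) \<Rightarrow> nat set \<Rightarrow> (nat \<Rightarrow> bool) \<Rightarrow> bool" where
  "determined n f S x = (\<forall>x'\<in>cube n. (\<forall>i\<in>S. x' i = x i) \<longrightarrow> f x' = f x)"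

text \<open>Read-once DNF: a nonempty family of pairwise disjoint nonempty terms
  (sets of unnegated variables from {0..<n}).\<close>
definition read_once_dnf :: "nat \<Rightarrow> nat set set \<Rightarrow> bool" where
  "read_once_dnf n T = (finite T \<and> T \<noteq> {} \<and> (\<forall>t\<in>T. t \<noteq> {} \<and> t \<subseteq> {..<n}) \<and>
     (\<forall>t\<in>T. \<forall>t'\<in>T. t \<noteq> t' \<longrightarrow> t \<inter> t' = {}))"

definition dnf_eval :: "nat set set \<Rightarrow> (nat \<Rightarrow> bool) \<Rightarrow> bool" where
  "dnf_eval T x = (\<exists>t\<in>T. \<forall>i\<in>t. x i)"

text \<open>Adaptive strategies: decision trees. Test i l r tests variable i,
  continues with l if x_i = 0 and with r if x_i = 1.\<close>
datatype dtree = Leaf | Test nat dtree dtree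

fun tree_vars :: "dtree \<Rightarrow> nat set" where
  "tree_vars Leaf = {}"
| "tree_vars (Test i l r) = insert i (tree_vars l \<union> tree_vars r)"

fun path_vars :: "dtree \<Rightarrow> (nat \<Rightarrow> bool) \<Rightarrow> nat set" where
  "path_vars Leaf x = {}"
| "path_vars (Test i l r) x = insert i (if x i then path_vars r x else path_vars l x)"

fun path_cost :: "(nat \<Rightarrow> real) \<Rightarrow> dtree \<Rightarrow> (nat \<Rightarrow> bool) \<Rightarrow> real" where
  "path_cost c Leaf x = 0"
| "path_cost c (Test i l r) x = c i + (if x i then path_cost c r x else path_cost c l x)"

definition valid_tree :: "nat \<Rightarrow> ((nat \<Rightarrow> bool) \<Rightarrow> bool) \<Rightarrow> dtree \<Rightarrow> bool" where
  "valid_tree n f t = (tree_vars t \<subseteq> {..<n} \<and>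
     (\<forall>x\<in>cube n. determined n f (path_vars t x) x))"

definition cost_adaptive ::
  "nat \<Rightarrow> ((nat \<Rightarrow> bool) \<Rightarrow> bool) \<Rightarrow> (nat \<Rightarrow> real) \<Rightarrow> (nat \<Rightarrow> real) \<Rightarrow> dtree \<Rightarrow> real" where
  "cost_adaptive n f c p t = (\<Sum>x\<in>cube n. prob_input n p x * path_cost c t x)"

definition OPT_A ::
  "nat \<Rightarrow> ((nat \<Rightarrow> bool) \<Rightarrow> bool) \<Rightarrow> (nat \<Rightarrow> real) \<Rightarrow> (nat \<Rightarrow> real) \<Rightarrow> real" where
  "OPT_A n f c p = (INF t\<in>{t. valid_tree n f t}. cost_adaptive n f c p t)"

text \<open>Non-adaptive strategies: permutations of {0..<n} (as distinct lists);
  variables are tested in order until f(x) is determined.\<close>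
definition perms :: "nat \<Rightarrow> nat list set" where
  "perms n = {\<pi>. distinct \<pi> \<and> set \<pi> = {..<n}}"

definition stop_len ::
  "nat \<Rightarrow> ((nat \<Rightarrow> bool) \<Rightarrow> bool) \<Rightarrow> nat list \<Rightarrow> (nat \<Rightarrow> bool) \<Rightarrow> nat" where
  "stop_len n f \<pi> x = (LEAST k. determined n f (set (take k \<pi>)) x)"

definition cost_nonadaptive ::
  "nat \<Rightarrow> ((nat \<Rightarrow> bool) \<Rightarrow> bool) \<Rightarrow> (nat \<Rightarrow> real) \<Rightarrow> (nat \<Rightarrow> real) \<Rightarrow> nat list \<Rightarrow> real" where
  "cost_nonadaptive n f c p \<pi> =
     (\<Sum>x\<in>cube n. prob_input n p x * (\<Sum>i\<leftarrow>take (stop_len n f \<pi> x) \<pi>. c i))"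

definition OPT_N ::
  "nat \<Rightarrow> ((nat \<Rightarrow> bool) \<Rightarrow> bool) \<Rightarrow> (nat \<Rightarrow> real) \<Rightarrow> (nat \<Rightarrow> real) \<Rightarrow> real" where
  "OPT_N n f c p = Min (cost_nonadaptive n f c p ` perms n)"

end

theory Submission
  imports Defs
begin


lemma cube_0: "cube 0 = {\<lambda>_. False}"
  by (auto simp: cube_def)

lemma cube_Suc: "cube (Suc n) = cube n \<union> (\<lambda>x. x(n:=True)) ` cube n"
proof (intro equalityI subsetI)
  fix x assume x: "x \<in> cube (Suc n)"
  show "x \<in> cube n \<union> (\<lambda>x. x(n:=True)) ` cube n"
  proof (cases "x n")
    case True
    then have "x = (x(n:=False))(n:=True)" by (simp add: fun_eq_iff)
    moreover have "x(n:=False) \<in> cube n" using x by (auto simp: cube_def)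
    ultimately show ?thesis by blast
  next
    case False
    have "x \<in> cube n" unfolding cube_def
    proof (intro CollectI allI impI)
      fix i assume "n \<le> i"
      show "x i = False"
      proof (cases "i = n")
        case True then show ?thesis using False by simp
      next
        case b: False then have "Suc n \<le> i" using \<open>n \<le> i\<close> by simp
        then show ?thesis using x by (simp add: cube_def)
      qed
    qed
    then show ?thesis by blast
  qed
qed (auto simp: cube_def)

lemma finite_cube: "finite (cube n)"
  by (induction n) (auto simp: cube_0 cube_Suc)

lemma sum_cube_Suc:
  "(\<Sum>x\<in>cube (Suc n). g x) = (\<Sum>x\<in>cube n. g x) + (\<Sum>x\<in>cube n. g (x(n:=True)))"
proof -
  have inj: "inj_on (\<lambda>x. x(n:=True)) (cube n)"
    by (auto simp: inj_on_def cube_def fun_eq_iff)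
  have disj: "cube n \<inter> (\<lambda>x. x(n:=True)) ` cube n = {}"
    by (auto simp: cube_def)
  have "(\<Sum>x\<in>cube (Suc n). g x) = (\<Sum>x\<in>cube n. g x) + (\<Sum>x\<in>(\<lambda>x. x(n:=True)) ` cube n. g x)"
    unfolding cube_Suc by (rule sum.union_disjoint) (auto simp: finite_cube disj)
  also have "(\<Sum>x\<in>(\<lambda>x. x(n:=True)) ` cube n. g x) = (\<Sum>x\<in>cube n. g (x(n:=True)))"
    by (simp add: sum.reindex[OF inj])
  finally show ?thesis .
qed

lemma ifsum: "(if A \<and> P then 1 else 0) + (if A \<and> Q then 1 else 0) =
  (if A then 1 else 0::real) * ((if P then 1 else 0) + (if Q then 1 else 0))"
  by simp

lemma pattern_count:
  "S \<subseteq> {..<n} \<Longrightarrow>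
   (\<Sum>x\<in>cube n. (if \<forall>i\<in>S. x i = v i then 1 else 0)) = (2::real)^n / 2^card S"
proof (induction n arbitrary: S)
  case 0
  then show ?case by (simp add: cube_0)
next
  case (Suc n)
  define S' where "S' = S - {n}"
  have S': "S' \<subseteq> {..<n}" using Suc.prems by (auto simp: S'_def less_Suc_eq)
  have fin: "finite S" using Suc.prems by (rule finite_subset) simp
  have bs: "\<And>P. (\<forall>i\<in>S. P i) = ((\<forall>i\<in>S'. P i) \<and> (n \<in> S \<longrightarrow> P n))"
    by (auto simp: S'_def)
  have e1: "\<And>x. x \<in> cube n \<Longrightarrow> (\<forall>i\<in>S. x i = v i) = ((\<forall>i\<in>S'. x i = v i) \<and> (n \<in> S \<longrightarrow> v n = False))"
    by (subst bs) (auto simp: cube_def)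
  have e2: "\<And>x. x \<in> cube n \<Longrightarrow> (\<forall>i\<in>S. (x(n:=True)) i = v i) = ((\<forall>i\<in>S'. x i = v i) \<and> (n \<in> S \<longrightarrow> v n = True))"
  proof -
    have "n \<notin> S'" by (simp add: S'_def)
    show "\<And>x. x \<in> cube n \<Longrightarrow> (\<forall>i\<in>S. (x(n:=True)) i = v i) = ((\<forall>i\<in>S'. x i = v i) \<and> (n \<in> S \<longrightarrow> v n = True))"
    proof -
      fix x
      have "(\<forall>i\<in>S'. (x(n:=True)) i = v i) = (\<forall>i\<in>S'. x i = v i)"
        using \<open>n \<notin> S'\<close> by (intro ball_cong) auto
      then show "(\<forall>i\<in>S. (x(n:=True)) i = v i) = ((\<forall>i\<in>S'. x i = v i) \<and> (n \<in> S \<longrightarrow> v n = True))"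
        by (subst bs) auto
    qed
  qed
  have "(\<Sum>x\<in>cube (Suc n). (if \<forall>i\<in>S. x i = v i then 1 else 0::real))
     = (\<Sum>x\<in>cube n. (if \<forall>i\<in>S'. x i = v i then 1 else 0)) * ((if n \<in> S \<longrightarrow> v n = False then 1 else 0) + (if n \<in> S \<longrightarrow> v n = True then 1 else 0))"
  proof -
    have pt: "(if \<forall>i\<in>S. x i = v i then 1 else 0) + (if \<forall>i\<in>S. (x(n:=True)) i = v i then 1 else 0)
       = (if \<forall>i\<in>S'. x i = v i then 1 else 0::real) * ((if n \<in> S \<longrightarrow> v n = False then 1 else 0) + (if n \<in> S \<longrightarrow> v n = True then 1 else 0))"
      if x: "x \<in> cube n" for x
      unfolding e1[OF x] e2[OF x] by (rule ifsum)
    show ?thesis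
      unfolding sum_cube_Suc sum.distrib[symmetric] sum_distrib_right
      by (rule sum.cong[OF refl], erule pt)
  qed
  also have "\<dots> = 2^n / 2^card S' * ((if n \<in> S \<longrightarrow> v n = False then 1 else 0) + (if n \<in> S \<longrightarrow> v n = True then 1 else 0))"
    using Suc.IH[OF S'] by simp
  also have "\<dots> = 2^Suc n / 2^card S"
  proof (cases "n \<in> S")
    case True
    then have "card S = Suc (card S')" using card_Suc_Diff1[OF fin True] unfolding S'_def by simp
    then show ?thesis using True by auto
  next
    case False
    then have "S' = S" by (auto simp: S'_def)
    then show ?thesis using False by simp
  qed
  finally show ?case .
qed

lemma prob_half: "prob_input n (\<lambda>_. 1/2) x = (1/2)^n"
proof -
  have "prob_input n (\<lambda>_. 1/2) x = (\<Prod>i<n. 1/2)"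
    unfolding prob_input_def by (rule prod.cong) auto
  then show ?thesis by simp
qed

lemma pattern_prob:
  "S \<subseteq> {..<n} \<Longrightarrow>
   (\<Sum>x\<in>cube n. prob_input n (\<lambda>_. 1/2) x * (if \<forall>i\<in>S. x i = v i then 1 else 0)) = 1 / 2^card S"
proof -
  assume S: "S \<subseteq> {..<n}"
  have "(\<Sum>x\<in>cube n. prob_input n (\<lambda>_. 1/2) x * (if \<forall>i\<in>S. x i = v i then 1 else 0))
     = (1/2)^n * (\<Sum>x\<in>cube n. (if \<forall>i\<in>S. x i = v i then 1 else 0))"
    by (simp add: prob_half sum_distrib_left)
  also have "\<dots> = 1 / 2^card S" using pattern_count[OF S] by (simp add: power_one_over)
  finally show ?thesis .
qed



fun seqt :: "dtree \<Rightarrow> dtree \<Rightarrow> dtree" where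
  "seqt Leaf u = u"
| "seqt (Test i l r) u = Test i (seqt l u) (seqt r u)"

fun blk :: "nat list \<Rightarrow> nat \<Rightarrow> dtree" where
  "blk [] b = Test b Leaf Leaf"
| "blk (a#as) b = Test a Leaf (blk as b)"

lemma path_vars_seqt: "path_vars (seqt t u) x = path_vars t x \<union> path_vars u x"
  by (induction t) auto

lemma path_cost_seqt: "path_cost c (seqt t u) x = path_cost c t x + path_cost c u x"
  by (induction t) auto

lemma tree_vars_seqt: "tree_vars (seqt t u) \<subseteq> tree_vars t \<union> tree_vars u"
  by (induction t) auto

lemma tree_vars_blk: "tree_vars (blk as b) = insert b (set as)"
  by (induction as) auto

lemma blk_cover:
  "(\<exists>a\<in>set as. \<not> x a \<and> a \<in> path_vars (blk as b) x) \<or> insert b (set as) \<subseteq> path_vars (blk as b) x"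
  by (induction as) auto

lemma blk_cost:
  assumes "\<And>i. c i \<ge> 0"
  shows "path_cost c (blk as b) x \<le> sum_list (map c as) + (if \<forall>a\<in>set as. x a then c b else 0)"
proof (induction as)
  case Nil then show ?case by simp
next
  case (Cons a as)
  have "0 \<le> sum_list (map c as)" by (rule sum_list_nonneg) (auto simp: assms)
  then show ?case using Cons assms by auto
qed

lemma path_cost_nonneg: "(\<And>i. c i \<ge> 0) \<Longrightarrow> path_cost c t x \<ge> 0"
  by (induction t) auto

lemma det_dnf:
  assumes "\<forall>t\<in>T. (\<exists>i\<in>t\<inter>P. \<not> x i) \<or> t \<subseteq> P"
  shows "determined n (dnf_eval T) P x"
  unfolding determined_def dnf_eval_def
proof (intro ballI impI)
  fix x' assume agree: "\<forall>i\<in>P. x' i = x i"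
  have eq: "\<And>t. t \<in> T \<Longrightarrow> (\<forall>i\<in>t. x' i) = (\<forall>i\<in>t. x i)"
  proof -
    fix t assume "t \<in> T"
    then consider (a) "\<exists>i\<in>t\<inter>P. \<not> x i" | (b) "t \<subseteq> P" using assms by blast
    then show "(\<forall>i\<in>t. x' i) = (\<forall>i\<in>t. x i)"
    proof cases
      case a then show ?thesis using agree by auto
    next
      case b then show ?thesis using agree by auto
    qed
  qed
  show "(\<exists>t\<in>T. \<forall>i\<in>t. x' i) = (\<exists>t\<in>T. \<forall>i\<in>t. x i)" by (rule bex_cong[OF refl eq])
qed

lemma stop_len_det:
  assumes "\<pi> \<in> perms n" "x \<in> cube n"
  shows "determined n f (set (take (stop_len n f \<pi> x) \<pi>)) x"
proof -
  have "determined n f (set (take (length \<pi>) \<pi>)) x"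
    unfolding determined_def
  proof (intro ballI impI)
    fix x' assume x': "x' \<in> cube n" and ag: "\<forall>i\<in>set (take (length \<pi>) \<pi>). x' i = x i"
    have "x' = x"
    proof
      fix i show "x' i = x i"
      proof (cases "i < n")
        case True
        then have "i \<in> set \<pi>" using assms(1) by (simp add: perms_def)
        then show ?thesis using ag by simp
      next
        case False then show ?thesis using x' assms(2) by (auto simp: cube_def)
      qed
    qed
    then show "f x' = f x" by simp
  qed
  then show ?thesis unfolding stop_len_def by (rule LeastI)
qed

lemma cost_list_set:
  "distinct \<pi> \<Longrightarrow> (\<Sum>i\<leftarrow>take s \<pi>. c i) = sum c (set (take s \<pi>))"
  by (simp add: sum_list_distinct_conv_sum_set)

lemma finite_perms: "finite (perms n)"
proof -
  have "perms n \<subseteq> {xs. set xs \<subseteq> {..<n} \<and> length xs = n}"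
  proof
    fix xs assume "xs \<in> perms n"
    then have "distinct xs" "set xs = {..<n}" by (auto simp: perms_def)
    then have "length xs = n" using distinct_card[of xs] by simp
    then show "xs \<in> {xs. set xs \<subseteq> {..<n} \<and> length xs = n}" using \<open>set xs = {..<n}\<close> by simp
  qed
  then show ?thesis by (rule finite_subset) (rule finite_lists_length_eq, simp)
qed

lemma perms_ne: "[0..<n] \<in> perms n"
  by (auto simp: perms_def)



definition bv :: "nat \<Rightarrow> nat \<Rightarrow> nat" where "bv m j = j*(m+1)+m"
definition bl :: "nat \<Rightarrow> nat \<Rightarrow> nat list" where "bl m j = [j*(m+1)..<j*(m+1)+m]"
definition tm :: "nat \<Rightarrow> nat \<Rightarrow> nat set" where "tm m j = {j*(m+1)..<j*(m+1)+Suc m}"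
definition TT :: "nat \<Rightarrow> nat \<Rightarrow> nat set set" where "TT m k = tm m ` {..<k}"
definition cc :: "nat \<Rightarrow> real \<Rightarrow> nat \<Rightarrow> real" where "cc m \<delta> i = (if i mod (m+1) = m then 1 else \<delta>)"

fun tr :: "nat \<Rightarrow> nat \<Rightarrow> dtree" where
  "tr m 0 = Leaf"
| "tr m (Suc j) = seqt (tr m j) (blk (bl m j) (bv m j))"

lemma mem_tm: "i \<in> tm m j \<longleftrightarrow> i div (Suc m) = j"
proof
  assume "i \<in> tm m j"
  then have "j * Suc m \<le> i" "i < Suc j * Suc m" by (auto simp: tm_def)
  then show "i div Suc m = j"
    by (metis div_nat_eqI mult.commute)
next
  assume "i div Suc m = j"
  then show "i \<in> tm m j" unfolding tm_def
    by (metis add.commute atLeastLessThan_iff div_times_less_eq_dividend dividend_less_div_times mult.commute plus_1_eq_Suc zero_less_Suc)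
qed

lemma tm_split: "tm m j = insert (bv m j) (set (bl m j))"
  by (auto simp: tm_def bv_def bl_def)

lemma bv_notin: "bv m j \<notin> set (bl m j)"
  by (simp add: bv_def bl_def)

lemma tm_disj: "j \<noteq> j' \<Longrightarrow> tm m j \<inter> tm m j' = {}"
  by (auto simp: mem_tm)

lemma bv_in: "bv m j \<in> tm m j"
  by (simp add: tm_split)

lemma bl_sub: "set (bl m j) \<subseteq> tm m j"
  by (auto simp: tm_split)

lemma bv_inj: "bv m j = bv m j' \<Longrightarrow> j = j'"
proof -
  assume "bv m j = bv m j'"
  then have "j*(m+1) = j'*(m+1)" unfolding bv_def by (rule add_right_imp_eq)
  then show ?thesis by (metis Suc_eq_plus1 nat.distinct(1) mult_cancel2)
qed

lemma cc_bv: "cc m \<delta> (bv m j) = 1"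
proof -
  have "(j * Suc m + m) mod Suc m = m" by (metis mod_less lessI mod_mult_self3)
  then show ?thesis unfolding cc_def bv_def by simp
qed

lemma cc_bl: "a \<in> set (bl m j) \<Longrightarrow> cc m \<delta> a = \<delta>"
proof -
  assume a: "a \<in> set (bl m j)"
  then have "a div Suc m = j" using bl_sub mem_tm by blast
  moreover have "a \<noteq> bv m j" using a bv_notin by metis
  ultimately have "a mod Suc m \<noteq> m" unfolding bv_def
    by (metis Suc_eq_plus1 div_mult_mod_eq mult.commute)
  then show ?thesis by (simp add: cc_def)
qed

lemma card_bl: "card (set (bl m j)) = m"
  by (simp add: bl_def)

lemma tm_sub: "j < k \<Longrightarrow> k*(m+1) \<le> n \<Longrightarrow> tm m j \<subseteq> {..<n}"
proof -
  assume "j < k" "k*(m+1) \<le> n"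
  then have "Suc j * (m+1) \<le> n" by (meson le_trans mult_le_mono1 Suc_leI)
  then show ?thesis by (auto simp: tm_def)
qed

lemma ro: "1 \<le> k \<Longrightarrow> k*(m+1) \<le> n \<Longrightarrow> read_once_dnf n (TT m k)"
  unfolding read_once_dnf_def TT_def
proof (intro conjI ballI impI)
  assume "1 \<le> k" "k*(m+1) \<le> n"
  show "finite (tm m ` {..<k})" by simp
  have "tm m 0 \<in> tm m ` {..<k}" using \<open>1 \<le> k\<close> by simp
  then show "tm m ` {..<k} \<noteq> {}" by blast
  fix t assume "t \<in> tm m ` {..<k}"
  then obtain j where "j < k" "t = tm m j" by auto
  then show "t \<noteq> {}" using bv_in[of m j] by auto
  show "t \<subseteq> {..<n}" using tm_sub[OF \<open>j < k\<close> \<open>k*(m+1) \<le> n\<close>] \<open>t = tm m j\<close> by simp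
next
  fix t t' assume "t \<in> tm m ` {..<k}" "t' \<in> tm m ` {..<k}" "t \<noteq> t'"
  then obtain j j' where "t = tm m j" "t' = tm m j'" "j \<noteq> j'" by auto
  then show "t \<inter> t' = {}" using tm_disj by simp
qed

lemma pv_tr: "path_vars (tr m j) x = (\<Union>j'<j. path_vars (blk (bl m j') (bv m j')) x)"
  by (induction j) (auto simp: path_vars_seqt lessThan_Suc)

lemma pc_tr: "path_cost c (tr m j) x = (\<Sum>j'<j. path_cost c (blk (bl m j') (bv m j')) x)"
  by (induction j) (auto simp: path_cost_seqt)

lemma tv_tr: "tree_vars (tr m j) \<subseteq> (\<Union>j'<j. tm m j')"
proof (induction j)
  case 0 then show ?case by simp
next
  case (Suc j)
  have "tree_vars (blk (bl m j) (bv m j)) \<subseteq> tm m j"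
    by (simp add: tree_vars_blk tm_split)
  then show ?case using Suc tree_vars_seqt[of "tr m j" "blk (bl m j) (bv m j)"]
    by (auto simp: lessThan_Suc)
qed

lemma valid_tr:
  assumes "k*(m+1) \<le> n"
  shows "valid_tree n (dnf_eval (TT m k)) (tr m k)"
  unfolding valid_tree_def
proof (intro conjI ballI)
  show "tree_vars (tr m k) \<subseteq> {..<n}" using tv_tr[of m k] tm_sub[OF _ assms] by blast
  fix x assume "x \<in> cube n"
  show "determined n (dnf_eval (TT m k)) (path_vars (tr m k) x) x"
  proof (rule det_dnf, rule ballI)
    fix t assume "t \<in> TT m k"
    then obtain j where j: "j < k" "t = tm m j" by (auto simp: TT_def)
    have sub: "path_vars (blk (bl m j) (bv m j)) x \<subseteq> path_vars (tr m k) x"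
      using j by (auto simp: pv_tr)
    from blk_cover[where as="bl m j" and x=x and b="bv m j"] sub
    show "(\<exists>i\<in>t \<inter> path_vars (tr m k) x. \<not> x i) \<or> t \<subseteq> path_vars (tr m k) x"
      using j bl_sub[of m j] by (auto simp: tm_split)
  qed
qed

lemma cost_tr_pt:
  assumes "\<delta> > 0"
  shows "path_cost (cc m \<delta>) (tr m k) x \<le> (\<Sum>j<k. m*\<delta> + (if \<forall>i\<in>set (bl m j). x i = True then 1 else 0))"
  unfolding pc_tr
proof (rule sum_mono)
  fix j
  have nn: "\<And>i. cc m \<delta> i \<ge> 0" using assms by (simp add: cc_def)
  have "sum_list (map (cc m \<delta>) (bl m j)) = sum (cc m \<delta>) (set (bl m j))"
    by (simp add: sum_list_distinct_conv_sum_set bl_def)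
  also have "\<dots> = sum (\<lambda>_. \<delta>) (set (bl m j))" by (rule sum.cong) (auto simp: cc_bl)
  also have "\<dots> = m * \<delta>" by (simp add: card_bl)
  finally have "sum_list (map (cc m \<delta>) (bl m j)) = m * \<delta>" .
  then show "path_cost (cc m \<delta>) (blk (bl m j) (bv m j)) x \<le> m*\<delta> + (if \<forall>i\<in>set (bl m j). x i = True then 1 else 0)"
    using blk_cost[where c="cc m \<delta>", OF nn, where as="bl m j" and b="bv m j" and x=x] unfolding cc_bv by auto
qed

lemma cost_tr:
  assumes "\<delta> > 0" "k*(m+1) \<le> n"
  shows "cost_adaptive n f (cc m \<delta>) (\<lambda>_. 1/2) (tr m k) \<le> k*m*\<delta> + k / 2^m"
proof -
  let ?P = "\<lambda>x. prob_input n (\<lambda>_. 1/2) x"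
  let ?I = "\<lambda>j x. (if \<forall>i\<in>set (bl m j). x i = True then 1 else 0::real)"
  have "cost_adaptive n f (cc m \<delta>) (\<lambda>_. 1/2) (tr m k) \<le> (\<Sum>x\<in>cube n. ?P x * (\<Sum>j<k. m*\<delta> + ?I j x))"
    unfolding cost_adaptive_def
    by (rule sum_mono, rule mult_left_mono[OF cost_tr_pt[OF assms(1)]]) (simp add: prob_half)
  also have "\<dots> = (\<Sum>j<k. m*\<delta> * (\<Sum>x\<in>cube n. ?P x) + (\<Sum>x\<in>cube n. ?P x * ?I j x))"
    by (simp add: sum_distrib_left sum.distrib sum_distrib_right sum.swap[of _ "cube n"] algebra_simps)
  also have "\<dots> = (\<Sum>j<k. m*\<delta> + 1/2^m)"
  proof (rule sum.cong[OF refl])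
    fix j assume "j \<in> {..<k}"
    then have S: "set (bl m j) \<subseteq> {..<n}" using bl_sub tm_sub assms(2) by blast
    have "(\<Sum>x\<in>cube n. ?P x) = 1" using pattern_prob[of "{}" n] by simp
    moreover have "(\<Sum>x\<in>cube n. ?P x * ?I j x) = 1/2^m"
      using pattern_prob[OF S, of "\<lambda>_. True"] by (simp add: card_bl)
    ultimately show "m*\<delta> * (\<Sum>x\<in>cube n. ?P x) + (\<Sum>x\<in>cube n. ?P x * ?I j x) = m*\<delta> + 1/2^m" by simp
  qed
  also have "\<dots> = k*m*\<delta> + k/2^m" by (simp add: distrib_left)
  finally show ?thesis by simp
qed



definition Lb :: "nat list \<Rightarrow> nat \<Rightarrow> nat" where
  "Lb \<pi> b = (LEAST s. b \<in> set (take s \<pi>))"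

definition EE :: "nat \<Rightarrow> nat \<Rightarrow> nat \<Rightarrow> (nat \<Rightarrow> bool) \<Rightarrow> bool" where
  "EE m k j x = ((\<forall>i\<in>set (bl m j). x i) \<and> \<not> x (bv m j) \<and> (\<forall>j'<k. j' \<noteq> j \<longrightarrow> \<not> (\<forall>i\<in>set (bl m j'). x i)))"

definition rr :: "nat \<Rightarrow> nat \<Rightarrow> nat list \<Rightarrow> nat \<Rightarrow> nat" where
  "rr m k \<pi> j = card {j'. j' < k \<and> bv m j' \<in> set (take (Lb \<pi> (bv m j)) \<pi>)}"

lemma Lb_mem: "b \<in> set \<pi> \<Longrightarrow> b \<in> set (take (Lb \<pi> b) \<pi>)"
  unfolding Lb_def by (rule LeastI[where k="length \<pi>"]) simp

lemma Lb_le: "b \<in> set (take s \<pi>) \<Longrightarrow> Lb \<pi> b \<le> s"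
  unfolding Lb_def by (rule Least_le)

lemma Lb_pair:
  assumes "b1 \<in> set \<pi>" "b2 \<in> set \<pi>"
  shows "b1 \<in> set (take (Lb \<pi> b2) \<pi>) \<or> b2 \<in> set (take (Lb \<pi> b1) \<pi>)"
proof (cases "Lb \<pi> b1 \<le> Lb \<pi> b2")
  case True
  then show ?thesis using Lb_mem[OF assms(1)] set_take_subset_set_take[OF True, of \<pi>] by blast
next
  case False
  then have le: "Lb \<pi> b2 \<le> Lb \<pi> b1" by simp
  then show ?thesis using Lb_mem[OF assms(2)] set_take_subset_set_take[OF le, of \<pi>] by blast
qed

lemma must_test:
  assumes "k*(m+1) \<le> n" "j < k" "x \<in> cube n" "EE m k j x"
    and det: "determined n (dnf_eval (TT m k)) S x"
  shows "bv m j \<in> S"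
proof (rule ccontr)
  assume nS: "bv m j \<notin> S"
  define x' where "x' = x(bv m j := True)"
  have bvn: "bv m j < n" using tm_sub[OF assms(2,1)] bv_in by blast
  have x'c: "x' \<in> cube n" using assms(3) bvn by (auto simp: cube_def x'_def)
  have ag: "\<forall>i\<in>S. x' i = x i" using nS by (auto simp: x'_def)
  have "dnf_eval (TT m k) x'"
    unfolding dnf_eval_def TT_def
  proof (rule bexI[where x="tm m j"])
    show "\<forall>i\<in>tm m j. x' i" using assms(4) by (auto simp: tm_split x'_def EE_def)
  qed (use assms(2) in simp)
  moreover have "\<not> dnf_eval (TT m k) x"
    unfolding dnf_eval_def TT_def
  proof
    assume "\<exists>t\<in>tm m ` {..<k}. \<forall>i\<in>t. x i"
    then obtain j'' where j'': "j'' < k" "\<forall>i\<in>tm m j''. x i" by auto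
    show False
    proof (cases "j'' = j")
      case True then show False using j'' bv_in[of m j] assms(4) by (auto simp: EE_def)
    next
      case False
      then have "\<exists>xa\<in>set (bl m j''). \<not> x xa" using assms(4) j'' by (auto simp: EE_def)
      then obtain xa where "xa \<in> set (bl m j'')" "\<not> x xa" by blast
      then show False using j''(2) bl_sub[of m j''] by blast
    qed
  qed
  ultimately show False using det x'c ag unfolding determined_def by blast
qed

lemma pt_lower:
  assumes "k*(m+1) \<le> n" "j < k" "x \<in> cube n" "EE m k j x" "\<pi> \<in> perms n" "\<delta> > 0"
  shows "real (rr m k \<pi> j) \<le> (\<Sum>i\<leftarrow>take (stop_len n (dnf_eval (TT m k)) \<pi> x) \<pi>. cc m \<delta> i)"
proof -
  let ?s = "stop_len n (dnf_eval (TT m k)) \<pi> x"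
  have dist: "distinct \<pi>" using assms(5) by (simp add: perms_def)
  have "bv m j \<in> set (take ?s \<pi>)"
    using must_test[OF assms(1-4) stop_len_det[OF assms(5,3)]] .
  then have Lle: "Lb \<pi> (bv m j) \<le> ?s" by (rule Lb_le)
  let ?J = "{j'. j' < k \<and> bv m j' \<in> set (take (Lb \<pi> (bv m j)) \<pi>)}"
  have sub: "bv m ` ?J \<subseteq> set (take ?s \<pi>)"
    using set_take_subset_set_take[OF Lle, of \<pi>] by auto
  have inj: "inj_on (bv m) ?J" by (auto simp: inj_on_def intro: bv_inj)
  have nn: "\<And>i. cc m \<delta> i \<ge> 0" using assms(6) by (simp add: cc_def)
  have "real (rr m k \<pi> j) = (\<Sum>j'\<in>?J. cc m \<delta> (bv m j'))"
    by (simp add: rr_def cc_bv)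
  also have "\<dots> = sum (cc m \<delta>) (bv m ` ?J)" by (simp add: sum.reindex[OF inj])
  also have "\<dots> \<le> sum (cc m \<delta>) (set (take ?s \<pi>))"
    by (rule sum_mono2[OF _ sub]) (simp_all add: nn)
  also have "\<dots> = (\<Sum>i\<leftarrow>take ?s \<pi>. cc m \<delta> i)" using cost_list_set[OF dist, where s="?s" and c="cc m \<delta>"] by simp
  finally show ?thesis .
qed

lemma rank_sum:
  assumes "k*(m+1) \<le> n" "\<pi> \<in> perms n"
  shows "real k ^ 2 / 2 \<le> (\<Sum>j<k. real (rr m k \<pi> j))"
proof -
  let ?I = "\<lambda>j j'. (if bv m j' \<in> set (take (Lb \<pi> (bv m j)) \<pi>) then 1 else 0::real)"
  have inpi: "\<And>j. j < k \<Longrightarrow> bv m j \<in> set \<pi>"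
    using assms tm_sub bv_in by (fastforce simp: perms_def)
  have r: "\<And>j. real (rr m k \<pi> j) = (\<Sum>j'<k. ?I j j')"
  proof -
    fix j
    have e: "{j'. j' < k \<and> bv m j' \<in> set (take (Lb \<pi> (bv m j)) \<pi>)} = {j'\<in>{..<k}. bv m j' \<in> set (take (Lb \<pi> (bv m j)) \<pi>)}"
      by auto
    have "real (rr m k \<pi> j) = (\<Sum>j'\<in>{j'\<in>{..<k}. bv m j' \<in> set (take (Lb \<pi> (bv m j)) \<pi>)}. 1)"
      unfolding rr_def e real_of_card ..
    also have "\<dots> = (\<Sum>j'<k. ?I j j')"
      by (rule sum.inter_filter) simp
    finally show "real (rr m k \<pi> j) = (\<Sum>j'<k. ?I j j')" .
  qed
  have "real k ^ 2 = (\<Sum>j<k. \<Sum>j'<k. 1::real)" by (simp add: power2_eq_square)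
  also have "\<dots> \<le> (\<Sum>j<k. \<Sum>j'<k. ?I j j' + ?I j' j)"
  proof (intro sum_mono)
    fix j j' assume "j \<in> {..<k}" "j' \<in> {..<k}"
    then show "1 \<le> ?I j j' + ?I j' j" using Lb_pair[OF inpi inpi, of j' j] by auto
  qed
  also have "\<dots> = (\<Sum>j<k. \<Sum>j'<k. ?I j j') + (\<Sum>j<k. \<Sum>j'<k. ?I j' j)"
    by (simp add: sum.distrib)
  also have "(\<Sum>j<k. \<Sum>j'<k. ?I j' j) = (\<Sum>j<k. \<Sum>j'<k. ?I j j')"
    by (rule sum.swap)
  finally have "real k ^ 2 \<le> 2 * (\<Sum>j<k. \<Sum>j'<k. ?I j j')" by simp
  then show ?thesis using r by simp
qed



definition pat :: "nat set \<Rightarrow> (nat \<Rightarrow> bool) \<Rightarrow> (nat \<Rightarrow> bool) \<Rightarrow> real" where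
  "pat S v x = (if \<forall>i\<in>S. x i = v i then 1 else 0)"

lemma card_tm: "card (tm m j) = Suc m"
  by (simp add: tm_def)

lemma E_prob:
  assumes "k*(m+1) \<le> n" "j < k"
  shows "(\<Sum>x\<in>cube n. prob_input n (\<lambda>_. 1/2) x * (if EE m k j x then 1 else 0))
          \<ge> 1/2^(m+1) - (real k - 1)/2^(2*m+1)"
proof -
  let ?P = "prob_input n (\<lambda>_. 1/2)"
  define v where "v = (\<lambda>i. i \<noteq> bv m j)"
  define S2 where "S2 = (\<lambda>j'. tm m j \<union> set (bl m j'))"
  let ?K = "{..<k} - {j}"
  have p1: "\<And>x. (\<forall>i\<in>tm m j. x i = v i) \<longleftrightarrow> (\<forall>i\<in>set (bl m j). x i) \<and> \<not> x (bv m j)"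
    using bv_notin[of m j] by (auto simp: tm_split v_def)
  have p2: "\<And>x j'. j' \<noteq> j \<Longrightarrow> (\<forall>i\<in>S2 j'. x i = v i) \<longleftrightarrow> (\<forall>i\<in>tm m j. x i = v i) \<and> (\<forall>i\<in>set (bl m j'). x i)"
  proof -
    fix x j' assume "j' \<noteq> j"
    then have "\<And>i. i \<in> set (bl m j') \<Longrightarrow> v i"
      using tm_disj[of j' j m] bl_sub[of m j'] bv_in[of m j] unfolding v_def by blast
    then show "(\<forall>i\<in>S2 j'. x i = v i) \<longleftrightarrow> (\<forall>i\<in>tm m j. x i = v i) \<and> (\<forall>i\<in>set (bl m j'). x i)"
      unfolding S2_def by auto
  qed
  have pt: "pat (tm m j) v x - (\<Sum>j'\<in>?K. pat (S2 j') v x) \<le> (if EE m k j x then 1 else 0)" for x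
  proof -
    have nn: "0 \<le> (\<Sum>j'\<in>?K. pat (S2 j') v x)" by (rule sum_nonneg) (simp add: pat_def)
    show ?thesis
    proof (cases "EE m k j x")
      case True
      then show ?thesis using nn by (simp add: pat_def)
    next
      case False
      show ?thesis
      proof (cases "\<forall>i\<in>tm m j. x i = v i")
        case c: True
        with False p1 obtain j' where j': "j' < k" "j' \<noteq> j" "\<forall>i\<in>set (bl m j'). x i"
          by (auto simp: EE_def)
        then have "pat (S2 j') v x = 1" using p2 c by (simp add: pat_def)
        moreover have "pat (S2 j') v x \<le> (\<Sum>j'\<in>?K. pat (S2 j') v x)"
          by (rule member_le_sum) (use j' in \<open>auto simp: pat_def\<close>)
        ultimately show ?thesis using False c by (simp add: pat_def)
      next
        case c: False
        then have "pat (tm m j) v x = 0" by (simp add: pat_def)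
        then show ?thesis using nn False by simp
      qed
    qed
  qed
  have S1sub: "tm m j \<subseteq> {..<n}" using tm_sub[OF assms(2,1)] .
  have S2sub: "\<And>j'. j' \<in> ?K \<Longrightarrow> S2 j' \<subseteq> {..<n}"
    using tm_sub[OF _ assms(1)] bl_sub assms(2) unfolding S2_def by blast
  have cS2: "\<And>j'. j' \<in> ?K \<Longrightarrow> card (S2 j') = 2*m+1"
  proof -
    fix j' assume "j' \<in> ?K"
    then have "tm m j \<inter> set (bl m j') = {}" using tm_disj[of j j' m] bl_sub[of m j'] by auto
    then show "card (S2 j') = 2*m+1" unfolding S2_def
      by (simp add: card_Un_disjoint card_tm card_bl tm_def)
  qed
  have "(\<Sum>x\<in>cube n. ?P x * (if EE m k j x then 1 else 0))
     \<ge> (\<Sum>x\<in>cube n. ?P x * (pat (tm m j) v x - (\<Sum>j'\<in>?K. pat (S2 j') v x)))"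
    by (rule sum_mono, rule mult_left_mono[OF pt]) (simp add: prob_half)
  moreover have "(\<Sum>x\<in>cube n. ?P x * (pat (tm m j) v x - (\<Sum>j'\<in>?K. pat (S2 j') v x)))
     = (\<Sum>x\<in>cube n. ?P x * pat (tm m j) v x) - (\<Sum>j'\<in>?K. \<Sum>x\<in>cube n. ?P x * pat (S2 j') v x)"
    by (simp add: right_diff_distrib sum_subtractf sum_distrib_left sum.swap[of _ "cube n"])
  moreover have "(\<Sum>x\<in>cube n. ?P x * pat (tm m j) v x) = 1/2^(m+1)"
    using pattern_prob[OF S1sub, of v] by (simp add: pat_def card_tm)
  moreover have "(\<Sum>j'\<in>?K. \<Sum>x\<in>cube n. ?P x * pat (S2 j') v x) = (\<Sum>j'\<in>?K. 1/2^(2*m+1))"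
    using pattern_prob[OF S2sub] cS2 by (simp add: pat_def)
  moreover have "(\<Sum>j'\<in>?K. 1/2^(2*m+1)::real) = (real k - 1)/2^(2*m+1)"
    using assms(2) by simp
  ultimately show ?thesis by linarith
qed



lemma EE_unique: "EE m k j x \<Longrightarrow> EE m k j' x \<Longrightarrow> j < k \<Longrightarrow> j' < k \<Longrightarrow> j = j'"
  unfolding EE_def by blast

lemma nonad_lower:
  assumes "k*(m+1) \<le> n" "\<delta> > 0" "\<pi> \<in> perms n"
    and q: "q \<le> 1/2^(m+1) - (real k - 1)/2^(2*m+1)" "0 \<le> q"
  shows "(\<Sum>j<k. real (rr m k \<pi> j)) * q \<le> cost_nonadaptive n (dnf_eval (TT m k)) (cc m \<delta>) (\<lambda>_. 1/2) \<pi>"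
proof -
  let ?P = "prob_input n (\<lambda>_. 1/2)"
  let ?C = "\<lambda>x. (\<Sum>i\<leftarrow>take (stop_len n (dnf_eval (TT m k)) \<pi> x) \<pi>. cc m \<delta> i)"
  let ?g = "\<lambda>x. (\<Sum>j<k. (if EE m k j x then 1 else 0) * real (rr m k \<pi> j))"
  have nn: "\<And>i. cc m \<delta> i \<ge> 0" using assms(2) by (simp add: cc_def)
  have gle: "?g x \<le> ?C x" if x: "x \<in> cube n" for x
  proof (cases "\<exists>j0<k. EE m k j0 x")
    case True
    then obtain j0 where j0: "j0 < k" "EE m k j0 x" by blast
    have "?g x = (if EE m k j0 x then 1 else 0) * real (rr m k \<pi> j0) + (\<Sum>j\<in>{..<k}-{j0}. (if EE m k j x then 1 else 0) * real (rr m k \<pi> j))"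
      by (rule sum.remove) (use j0 in auto)
    also have "(\<Sum>j\<in>{..<k}-{j0}. (if EE m k j x then 1 else 0) * real (rr m k \<pi> j)) = 0"
    proof (rule sum.neutral, rule ballI)
      fix j assume j: "j \<in> {..<k}-{j0}"
      have "\<not> EE m k j x"
      proof
        assume "EE m k j x"
        from EE_unique[OF j0(2) this j0(1)] j show False by auto
      qed
      then show "(if EE m k j x then 1 else 0) * real (rr m k \<pi> j) = 0" by simp
    qed
    finally have "?g x = real (rr m k \<pi> j0)" using j0 by simp
    then show ?thesis using pt_lower[OF assms(1) j0(1) x j0(2) assms(3,2)] by simp
  next
    case False
    then have "?g x = 0" by (intro sum.neutral) auto
    moreover have "0 \<le> ?C x" by (rule sum_list_nonneg) (auto simp: nn)
    ultimately show ?thesis by simp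
  qed
  have "(\<Sum>j<k. real (rr m k \<pi> j)) * q = (\<Sum>j<k. real (rr m k \<pi> j) * q)"
    by (simp add: sum_distrib_right)
  also have "\<dots> \<le> (\<Sum>j<k. real (rr m k \<pi> j) * (\<Sum>x\<in>cube n. ?P x * (if EE m k j x then 1 else 0)))"
  proof (rule sum_mono)
    fix j assume "j \<in> {..<k}"
    then have "q \<le> (\<Sum>x\<in>cube n. ?P x * (if EE m k j x then 1 else 0))"
      using E_prob[OF assms(1), of j] q(1) by simp
    then show "real (rr m k \<pi> j) * q \<le> real (rr m k \<pi> j) * (\<Sum>x\<in>cube n. ?P x * (if EE m k j x then 1 else 0))"
      by (rule mult_left_mono) simp
  qed
  also have "\<dots> = (\<Sum>x\<in>cube n. ?P x * ?g x)"
    by (simp add: sum_distrib_left sum.swap[of _ "cube n"] mult_ac)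
  also have "\<dots> \<le> (\<Sum>x\<in>cube n. ?P x * ?C x)"
    by (rule sum_mono, rule mult_left_mono[OF gle]) (simp_all add: prob_half)
  also have "\<dots> = cost_nonadaptive n (dnf_eval (TT m k)) (cc m \<delta>) (\<lambda>_. 1/2) \<pi>"
    by (simp add: cost_nonadaptive_def)
  finally show ?thesis .
qed



lemma ln2_ge: "1/2 \<le> ln (2::real)"
proof -
  have "exp (1/2::real) * exp (1/2) = exp 1" by (simp add: exp_add[symmetric])
  moreover have "exp (1::real) \<le> 3" by (rule exp_le)
  ultimately have h: "exp (1/2::real) * exp (1/2) \<le> 3" by simp
  have "exp (1/2::real) \<le> 2"
  proof (rule ccontr)
    assume "\<not> exp (1/2::real) \<le> 2"
    then have "2 < exp (1/2::real)" by simp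
    then have "2 * 2 < exp (1/2::real) * exp (1/2)" by (intro mult_strict_mono) auto
    then show False using h by simp
  qed
  then have "ln (exp (1/2::real)) \<le> ln 2" by (subst ln_le_cancel_iff) auto
  then show ?thesis by simp
qed

lemma pow_ge: "3 \<le> m \<Longrightarrow> 2*(m+1) \<le> (2::nat)^m"
proof (induction m rule: dec_induct)
  case base then show ?case by simp
next
  case (step m) then show ?case by simp
qed

lemma main_n:
  fixes \<epsilon> :: real
  assumes eps: "0 < \<epsilon>" "\<epsilon> < 1" and n: "8 < n"
  shows "\<exists>(T::nat set set) (c::nat \<Rightarrow> real).
                 read_once_dnf n T \<and> (\<forall>i<n. c i > 0) \<and>
                 OPT_N n (dnf_eval T) c (\<lambda>_. 1/2) \<ge>
                   (1/128) * (real n powr (1 - \<epsilon>) / ln (real n)) *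
                   OPT_A n (dnf_eval T) c (\<lambda>_. 1/2)"
proof -
  obtain m where m1: "2^m \<le> n" and m2: "n < 2^(m+1)"
    using ex_power_ivl1[of 2 n] n by auto
  have m3: "3 \<le> m"
  proof (rule ccontr)
    assume "\<not> 3 \<le> m"
    then have "m + 1 \<le> 3" by simp
    then have "(2::nat)^(m+1) \<le> 2^3" by (rule power_increasing) simp
    then show False using m2 n by simp
  qed
  define k where "k = n div (m+1)"
  have kle: "k*(m+1) \<le> n" unfolding k_def by (rule div_times_less_eq_dividend)
  have nlt: "n < k*(m+1) + (m+1)"
  proof -
    have "n = k*(m+1) + n mod (m+1)" unfolding k_def by (rule div_mult_mod_eq[symmetric])
    moreover have "n mod (m+1) < m+1" by simp
    ultimately show ?thesis by linarith
  qed
  have nge: "2*(m+1) \<le> n" using pow_ge[OF m3] m1 by linarith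
  have k1: "1 \<le> k"
  proof (rule ccontr)
    assume "\<not> 1 \<le> k" then have "k = 0" by simp
    then show False using nlt nge by simp
  qed
  have n2: "n \<le> 2*(k*(m+1))"
  proof -
    obtain K where K: "K = k*(m+1)" by blast
    have "n < K + (m+1)" using nlt K by simp
    then have "n \<le> 2*K" using nge by presburger
    then show ?thesis using K by simp
  qed
  have k2: "2*k \<le> 2^m"
  proof -
    obtain K P where K: "K = k*(m+1)" and P: "P = (2::nat)^m" by blast
    have "4*k \<le> K" using m3 K by simp
    moreover have "K \<le> n" using kle K by simp
    moreover have "n < 2*P" using m2 P by simp
    ultimately have "2*k \<le> P" by linarith
    then show ?thesis using P by simp
  qed
  define X where "X = (2::real)^m"
  have Xpos: "X > 0" by (simp add: X_def)
  have k2r: "2 * real k \<le> X"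
  proof -
    have "real (2*k) \<le> real ((2::nat)^m)" using k2 by (simp only: of_nat_le_iff)
    then show ?thesis unfolding X_def by simp
  qed
  define \<delta> where "\<delta> = 1 / (real m * X)"
  have mpos: "real m > 0" using m3 by simp
  have \<delta>pos: "\<delta> > 0" unfolding \<delta>_def using mpos Xpos by simp
  define T where "T = TT m k"
  define c where "c = cc m \<delta>"
  define f where "f = dnf_eval T"
  have ro': "read_once_dnf n T" unfolding T_def by (rule ro[OF k1 kle])
  have cpos: "\<forall>i<n. c i > 0" using \<delta>pos by (simp add: c_def cc_def)
  have valid: "valid_tree n f (tr m k)" unfolding f_def T_def by (rule valid_tr[OF kle])
  have costA: "cost_adaptive n f c (\<lambda>_. 1/2) (tr m k) \<le> 2 * real k / X"
  proof -
    have "cost_adaptive n f c (\<lambda>_. 1/2) (tr m k) \<le> real k * real m * \<delta> + real k/2^m"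
      unfolding c_def by (rule cost_tr[OF \<delta>pos kle])
    also have "real k * real m * \<delta> + real k/2^m = 2 * real k / X"
    proof -
      have "real k * real m * \<delta> = real k / X" unfolding \<delta>_def using mpos Xpos by simp
      moreover have "real k/2^m = real k / X" by (simp add: X_def)
      ultimately show ?thesis by (simp only:)
    qed
    finally show ?thesis .
  qed
  have nnA: "\<And>t. 0 \<le> cost_adaptive n f c (\<lambda>_. 1/2) t"
  proof -
    fix t
    have "\<And>i. c i \<ge> 0" using \<delta>pos by (simp add: c_def cc_def)
    then show "0 \<le> cost_adaptive n f c (\<lambda>_. 1/2) t"
      unfolding cost_adaptive_def
      by (intro sum_nonneg mult_nonneg_nonneg path_cost_nonneg) (simp_all add: prob_half)
  qed
  have bdd: "bdd_below (cost_adaptive n f c (\<lambda>_. 1/2) ` {t. valid_tree n f t})"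
    using nnA by (intro bdd_belowI[where m=0]) auto
  have OA1: "OPT_A n f c (\<lambda>_. 1/2) \<le> 2 * real k / X"
    unfolding OPT_A_def using cINF_lower[OF bdd, of "tr m k"] valid costA by simp
  have OA0: "0 \<le> OPT_A n f c (\<lambda>_. 1/2)"
    unfolding OPT_A_def using valid nnA by (intro cINF_greatest) auto
  define q where "q = 1 / (4*X)"
  have q1: "q \<le> 1/2^(m+1) - (real k - 1)/2^(2*m+1)"
  proof -
    have e1: "(2::real)^(m+1) = 2*X" by (simp add: X_def)
    have e2: "(2::real)^(2*m+1) = 2*X*X" unfolding X_def
      by (metis mult_2 power_add power_Suc Suc_eq_plus1 mult.assoc)
    have "(real k - 1) / (2*X*X) \<le> 1/(4*X)"
    proof -
      have h1: "2*X*(2*real k) \<le> 2*X*X" by (rule mult_left_mono[OF k2r]) (use Xpos in simp)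
      have e: "(real k - 1) * (4*X) = 2*X*(2*real k) - 4*X" by (simp add: algebra_simps)
      have "(real k - 1) * (4*X) \<le> 1 * (2*X*X)" unfolding e using h1 Xpos by linarith
      then show ?thesis using Xpos by (simp add: divide_simps)
    qed
    moreover have "1/(2*X) = 1/(4*X) + 1/(4*X)" using Xpos by (simp add: field_simps)
    ultimately show ?thesis unfolding q_def e1 e2 by linarith
  qed
  have q0: "0 \<le> q" unfolding q_def using Xpos by simp
  have ON: "real k ^ 2 / (8 * X) \<le> OPT_N n f c (\<lambda>_. 1/2)"
    unfolding OPT_N_def
  proof (subst Min_ge_iff)
    show "finite (cost_nonadaptive n f c (\<lambda>_. 1/2) ` perms n)" by (simp add: finite_perms)
    show "cost_nonadaptive n f c (\<lambda>_. 1/2) ` perms n \<noteq> {}" using perms_ne by blast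
    show "\<forall>a\<in>cost_nonadaptive n f c (\<lambda>_. 1/2) ` perms n. real k ^ 2 / (8 * X) \<le> a"
    proof
      fix a assume "a \<in> cost_nonadaptive n f c (\<lambda>_. 1/2) ` perms n"
      then obtain \<pi> where \<pi>: "\<pi> \<in> perms n" and a: "a = cost_nonadaptive n f c (\<lambda>_. 1/2) \<pi>" by auto
      have "real k ^ 2 / (8 * X) = (real k ^ 2 / 2) * q" unfolding q_def by simp
      also have "\<dots> \<le> (\<Sum>j<k. real (rr m k \<pi> j)) * q"
        by (rule mult_right_mono[OF rank_sum[OF kle \<pi>] q0])
      also have "\<dots> \<le> a" unfolding a f_def T_def c_def
        by (rule nonad_lower[OF kle \<delta>pos \<pi> q1 q0])
      finally show "real k ^ 2 / (8 * X) \<le> a" .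
    qed
  qed
  define A where "A = (1/128) * (real n powr (1 - \<epsilon>) / ln (real n))"
  have lnpos: "ln (real n) > 0" using n by simp
  have A0: "0 \<le> A" unfolding A_def using lnpos by simp
  have Ak: "A \<le> real k / 16"
  proof -
    have "real m * ln 2 = ln (2^m)" by (simp add: ln_realpow)
    also have "\<dots> \<le> ln (real n)"
    proof -
      have "real ((2::nat)^m) \<le> real n" using m1 by (simp only: of_nat_le_iff)
      then have h: "(2::real)^m \<le> real n" by simp
      then show ?thesis using ln_le_cancel_iff[of "2^m" "real n"] n by simp
    qed
    finally have ml: "real m * ln 2 \<le> ln (real n)" .
    have "real m * (1/2) \<le> real m * ln 2" by (rule mult_left_mono[OF ln2_ge]) simp
    then have mln: "real m \<le> 2 * ln (real n)" using ml by linarith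
    have "real m \<ge> 3" using m3 by simp
    then have m1ln: "real m + 1 \<le> 4 * ln (real n)" using mln by linarith
    have "real n \<le> 2 * (real k * (real m + 1))"
    proof -
      have "real n \<le> real (2*(k*(m+1)))" using n2 by (simp only: of_nat_le_iff)
      then show ?thesis by (simp add: algebra_simps)
    qed
    also have "\<dots> \<le> 2 * (real k * (4 * ln (real n)))"
      using m1ln by (intro mult_left_mono) auto
    finally have nk: "real n \<le> 8 * real k * ln (real n)" by simp
    have "real n powr (1 - \<epsilon>) \<le> real n powr 1"
      using n eps by (intro powr_mono) auto
    then have pw: "real n powr (1 - \<epsilon>) \<le> real n" using n by simp
    have "A \<le> (1/128) * (real n / ln (real n))"
      unfolding A_def using pw lnpos by (intro mult_left_mono divide_right_mono) auto
    also have "\<dots> \<le> real k / 16" using nk lnpos by (simp add: field_simps)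
    finally show ?thesis .
  qed
  have "A * OPT_A n f c (\<lambda>_. 1/2) \<le> (real k / 16) * OPT_A n f c (\<lambda>_. 1/2)"
    by (rule mult_right_mono[OF Ak OA0])
  also have "\<dots> \<le> (real k / 16) * (2 * real k / X)"
    by (rule mult_left_mono[OF OA1]) simp
  also have "\<dots> = real k ^ 2 / (8 * X)" by (simp add: power2_eq_square)
  also have "\<dots> \<le> OPT_N n f c (\<lambda>_. 1/2)" by (rule ON)
  finally have "A * OPT_A n f c (\<lambda>_. 1/2) \<le> OPT_N n f c (\<lambda>_. 1/2)" .
  then show ?thesis using ro' cpos unfolding A_def f_def by blast
qed

theorem theorem5:
  fixes \<epsilon> :: real
  assumes "0 < \<epsilon>" and "\<epsilon> < 1"
  shows "\<exists>n\<^sub>\<epsilon>::nat. n\<^sub>\<epsilon> > 0 \<and> (\<exists>c\<^sub>\<epsilon>::real. c\<^sub>\<epsilon> > 0 \<and>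
           (\<forall>n::nat. n > n\<^sub>\<epsilon> \<longrightarrow>
              (\<exists>(T::nat set set) (c::nat \<Rightarrow> real).
                 read_once_dnf n T \<and> (\<forall>i<n. c i > 0) \<and>
                 OPT_N n (dnf_eval T) c (\<lambda>_. 1/2) \<ge>
                   c\<^sub>\<epsilon> * (real n powr (1 - \<epsilon>) / ln (real n)) *
                   OPT_A n (dnf_eval T) c (\<lambda>_. 1/2))))"
  proof -
  have "\<forall>n::nat. n > 8 \<longrightarrow>
              (\<exists>(T::nat set set) (c::nat \<Rightarrow> real).
                 read_once_dnf n T \<and> (\<forall>i<n. c i > 0) \<and>
                 OPT_N n (dnf_eval T) c (\<lambda>_. 1/2) \<ge>
                   (1/128) * (real n powr (1 - \<epsilon>) / ln (real n)) *
                   OPT_A n (dnf_eval T) c (\<lambda>_. 1/2))"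
    using main_n[OF assms] by blast
  then show ?thesis by (intro exI[where x=8] conjI exI[where x="1/128::real"]) auto
qed

end
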